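(* Let $(\Sigma_+,\Sigma_-,N_1,N_2,N_3)$ be a solution of the Wainwright–Hsu system satisfying the constraint, with $N_1<0$ and $N_2,N_3>0$. Then for every $\epsilon>0$ there is $T$ such that $-N_1(\tau)(N_2+N_3)(\tau)\geq\frac12-\epsilon$ for all $\tau\geq T$.
   Context: Wainwright–Hsu system: for functions $N_1,N_2,N_3,\Sigma_+,\Sigma_-$ of $\tau\in\mathbb{R}$ (prime denotes $d/d\tau$), $N_1'=(q-4\Sigma_+)N_1$, $N_2'=(q+2\Sigma_++2\sqrt3\Sigma_-)N_2$, $N_3'=(q+2\Sigma_+-2\sqrt3\Sigma_-)N_3$, $\Sigma_+'=-(2-q)\Sigma_+-3S_+$, $\Sigma_-'=-(2-q)\Sigma_--3S_-$, where $q=2(\Sigma_+^2+\Sigma_-^2)$, $S_+=\frac12[(N_2-N_3)^2-N_1(2N_1-N_2-N_3)]$, $S_-=\frac{\sqrt3}{2}(N_3-N_2)(N_1-N_2-N_3)$, together with the constraint $\Sigma_+^2+\Sigma_-^2+\frac34[N_1^2+N_2^2+N_3^2-2(N_1N_2+N_2N_3+N_1N_3)]=1$. Solutions with these sign conditions exist for all $\tau\in\mathbb{R}$. *)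

theory Defs
  imports "HOL-Analysis.Analysis"
begin

definition WH_q :: "real \<Rightarrow> real \<Rightarrow> real" where
  "WH_q Sp Sm = 2 * (Sp\<^sup>2 + Sm\<^sup>2)"

definition WH_Sp :: "real \<Rightarrow> real \<Rightarrow> real \<Rightarrow> real" where
  "WH_Sp n1 n2 n3 = (1/2) * ((n2 - n3)\<^sup>2 - n1 * (2*n1 - n2 - n3))"

definition WH_Sm :: "real \<Rightarrow> real \<Rightarrow> real \<Rightarrow> real" where
  "WH_Sm n1 n2 n3 = (sqrt 3 / 2) * (n3 - n2) * (n1 - n2 - n3)"

definition WH_solution ::
  "(real \<Rightarrow> real) \<Rightarrow> (real \<Rightarrow> real) \<Rightarrow> (real \<Rightarrow> real) \<Rightarrow> (real \<Rightarrow> real) \<Rightarrow> (real \<Rightarrow> real) \<Rightarrow> bool" where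
  "WH_solution N1 N2 N3 Sp Sm \<longleftrightarrow>
    (\<forall>t. (N1 has_real_derivative ((WH_q (Sp t) (Sm t) - 4 * Sp t) * N1 t)) (at t)
       \<and> (N2 has_real_derivative ((WH_q (Sp t) (Sm t) + 2 * Sp t + 2 * sqrt 3 * Sm t) * N2 t)) (at t)
       \<and> (N3 has_real_derivative ((WH_q (Sp t) (Sm t) + 2 * Sp t - 2 * sqrt 3 * Sm t) * N3 t)) (at t)
       \<and> (Sp has_real_derivative (- (2 - WH_q (Sp t) (Sm t)) * Sp t - 3 * WH_Sp (N1 t) (N2 t) (N3 t))) (at t)
       \<and> (Sm has_real_derivative (- (2 - WH_q (Sp t) (Sm t)) * Sm t - 3 * WH_Sm (N1 t) (N2 t) (N3 t))) (at t)
       \<and> (Sp t)\<^sup>2 + (Sm t)\<^sup>2 + (3/4) * ((N1 t)\<^sup>2 + (N2 t)\<^sup>2 + (N3 t)\<^sup>2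
            - 2 * (N1 t * N2 t + N2 t * N3 t + N1 t * N3 t)) = 1)"

end

theory Submission
  imports Defs
begin


lemma lin_aux:
  fixes T1 T2 T3 T4 S X Z u :: real
  assumes "-2*u \<le> T1" "-(2/3)*u \<le> T2" "3/2*X \<le> 2/3*u" "0 \<le> T3" "0 \<le> T4" "0 \<le> S" "0 \<le> u"
  shows "3/2 - Z - 2*u - 2/3*u - 2/3*u - 2/3*u \<le> (3/2 - Z + S - 3/2*X) + T1 + T2 + T3 + T4"
  using assms by linarith

lemma Y_ineq:
  fixes a b c p r k q da db dc dr :: real
  assumes k: "k*k = 3" "k > 0"
    and ab: "a < 0" "b > 0" "c > 0"
    and q: "q = 2*(p^2+r^2)"
    and da: "da = (q - 4*p)*a" and db: "db = (q + 2*p + 2*k*r)*b"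
    and dc: "dc = (q + 2*p - 2*k*r)*c"
    and dr: "dr = -(2-q)*r - 3*((k/2)*(c-b)*(a-b-c))"
    and con: "p^2 + r^2 + 3/4*(a^2+b^2+c^2 - 2*(a*b+b*c+a*c)) = 1"
    and n1: "b + c \<ge> 1"
  shows "(-(da*(b+c)) - a*(db+dc)) / (-a*(b+c))
     - ((((db - dc)*r + (b-c)*dr)*(b+c) - (b-c)*r*(db+dc)) / ((b+c)*(b+c))) / k
     \<ge> 3/2 - 3*(-a*(b+c)) - 4/(b+c)"
proof -
  define x where "x = -a"
  define n where "n = b + c"
  define m where "m = b - c"
  have x0: "x > 0" and n0: "n > 0" using ab by (auto simp: x_def n_def)
  have con2: "p^2 + r^2 + 3/4*x^2 + 3/4*m^2 + 3/2*(x*n) = 1"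
    using con unfolding x_def n_def m_def by (simp add: algebra_simps power2_eq_square)
  have xn0: "x*n > 0" using x0 n0 by simp
  have sq: "x^2 \<ge> 0" "m^2 \<ge> 0" "p^2 \<ge> 0" "r^2 \<ge> 0" by auto
  have pr1: "p^2 + r^2 \<le> 1" using con2 xn0 sq by linarith
  have rm1: "r^2 + 3/4*m^2 \<le> 1" using con2 xn0 sq by linarith
  have xn: "x*n \<le> 2/3" using con2 sq by linarith
  have q2: "0 \<le> 2 - q" "2 - q \<le> 2" using q pr1 by auto
  have krm: "k*\<bar>r*m\<bar> \<le> 1"
  proof -
    have "0 \<le> (\<bar>r\<bar> - k/2*\<bar>m\<bar>)^2" by simp
    also have "\<dots> = r^2 + (k*k)/4*m^2 - k*\<bar>r*m\<bar>"
      by (simp add: power2_eq_square algebra_simps abs_mult)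
    finally show ?thesis using rm1 k by simp
  qed
  have Zd: "-(da*n) - a*(db+dc) = 2*(q-p)*(x*n) + 2*k*r*x*m"
    unfolding da db dc x_def n_def m_def by (simp add: algebra_simps)
  have Pd: "((db - dc)*r + m*dr)*n - m*r*(db+dc)
     = (q-2)*m*r*n + 2*k*n^2*(r^2 - 3/4*m^2) - 3*k/2*m^2*x*n - 2*k*r^2*m^2"
    unfolding da db dc dr x_def n_def m_def power2_eq_square by (simp add: field_simps)
  have L: "(-(da*(b+c)) - a*(db+dc)) / (-a*(b+c))
     - ((((db - dc)*r + (b-c)*dr)*(b+c) - (b-c)*r*(db+dc)) / ((b+c)*(b+c))) / k
     = 2*(q-p) + 2*k*r*m/n - ((q-2)*m*r/(k*n) + 2*(r^2 - 3/4*m^2) - 3/2*m^2*x/n - 2*r^2*m^2/n^2)"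
  proof -
    have e1: "(-(da*(b+c)) - a*(db+dc)) / (-a*(b+c)) = 2*(q-p) + 2*k*r*m/n"
    proof -
      have "-a*(b+c) = x*n" by (simp add: x_def n_def)
      moreover have "-(da*(b+c)) - a*(db+dc) = 2*(q-p)*(x*n) + 2*k*r*x*m" using Zd by (simp add: n_def)
      ultimately have "(-(da*(b+c)) - a*(db+dc)) / (-a*(b+c)) = (2*(q-p)*(x*n) + 2*k*r*x*m)/(x*n)" by simp
      also have "\<dots> = 2*(q-p) + 2*k*r*m/n" using x0 n0 by (simp add: field_simps)
      finally show ?thesis .
    qed
    have e2: "((((db - dc)*r + (b-c)*dr)*(b+c) - (b-c)*r*(db+dc)) / ((b+c)*(b+c))) / k
       = (q-2)*m*r/(k*n) + 2*(r^2 - 3/4*m^2) - 3/2*m^2*x/n - 2*r^2*m^2/n^2"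
    proof -
      have "(((db - dc)*r + (b-c)*dr)*(b+c) - (b-c)*r*(db+dc)) = (q-2)*m*r*n + 2*k*n^2*(r^2 - 3/4*m^2) - 3*k/2*m^2*x*n - 2*k*r^2*m^2"
        using Pd by (simp add: n_def m_def)
      hence "((((db - dc)*r + (b-c)*dr)*(b+c) - (b-c)*r*(db+dc)) / ((b+c)*(b+c))) / k
        = ((q-2)*m*r*n + 2*k*n^2*(r^2 - 3/4*m^2) - 3*k/2*m^2*x*n - 2*k*r^2*m^2) / (n*n) / k"
        by (simp add: n_def)
      also have "\<dots> = (q-2)*m*r/(k*n) + 2*(r^2 - 3/4*m^2) - 3/2*m^2*x/n - 2*r^2*m^2/n^2"
        using n0 k by (simp add: field_simps power2_eq_square)
      finally show ?thesis .
    qed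
    show ?thesis using e1 e2 by simp
  qed
  have main: "2*(q-p) - 2*(r^2 - 3/4*m^2) = 3/2 - 3*(x*n) + 2*(p-1/2)^2 - 3/2*x^2"
    using con2 q by (simp add: algebra_simps power2_eq_square)
  have b1: "2*k*r*m/n \<ge> -2/n"
  proof -
    have h: "-\<bar>r*m\<bar> \<le> r*m" by simp
    have "k*(-\<bar>r*m\<bar>) \<le> k*(r*m)" using mult_left_mono[OF h] k by simp
    hence "-(k*\<bar>r*m\<bar>) \<le> k*(r*m)" by simp
    hence "-1 \<le> k*r*m" using krm by simp
    thus ?thesis using n0 by (simp add: field_simps)
  qed
  have b2: "-((q-2)*m*r/(k*n)) \<ge> -(2/3)/n"
  proof -
    have "\<bar>r*m\<bar> \<le> 1/k" using krm k by (simp add: field_simps)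
    have "(2-q)*(m*r) \<ge> -(2*(1/k))"
    proof -
      have "\<bar>(2-q)*(m*r)\<bar> \<le> 2*(1/k)"
      proof -
        have "\<bar>(2-q)*(m*r)\<bar> = (2-q)*\<bar>r*m\<bar>" using q2 by (simp add: abs_mult mult.commute)
        also have "\<dots> \<le> 2*(1/k)"
          by (rule mult_mono) (use q2 \<open>\<bar>r*m\<bar> \<le> 1/k\<close> in auto)
        finally show ?thesis .
      qed
      thus ?thesis by linarith
    qed
    hence "(2-q)*(m*r)/k \<ge> (-(2*(1/k)))/k"
      using k by (intro divide_right_mono) auto
    moreover have "(-(2*(1/k)))/k = -(2/3)" using k by (simp add: field_simps)
    ultimately have "(2-q)*(m*r)/k \<ge> -(2/3)" by simp
    hence "(2-q)*(m*r)/k/n \<ge> -(2/3)/n" using n0 by (intro divide_right_mono) auto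
    moreover have "-((q-2)*m*r/(k*n)) = (2-q)*(m*r)/k/n" using n0 k by (simp add: field_simps)
    ultimately show ?thesis by linarith
  qed
  have b3: "3/2*x^2 \<le> (2/3)/n"
  proof -
    have "x \<le> (2/3)/n" using xn n0 by (simp add: field_simps)
    hence "x^2 \<le> ((2/3)/n)^2" using x0 by (simp add: power_mono)
    also have "\<dots> = (4/9)/n * (1/n)" by (simp add: power2_eq_square)
    also have "\<dots> \<le> (4/9)/n * 1" using n0 n1 unfolding n_def[symmetric]
      by (intro mult_left_mono) (auto simp: field_simps)
    finally show ?thesis by simp
  qed
  have b4: "3/2*m^2*x/n \<ge> 0" "2*r^2*m^2/n^2 \<ge> 0" "2*(p-1/2)^2 \<ge> 0"
    using x0 n0 by auto
  have "3/2 - 3*(-a*(b+c)) - 4/(b+c) = 3/2 - 3*(x*n) - 4/n"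
    unfolding n_def x_def by simp
  also have "4/n = 2/n + (2/3)/n + (2/3)/n + (2/3)/n" by (simp add: divide_simps)
  finally have "3/2 - 3*(-a*(b+c)) - 4/(b+c) = 3/2 - 3*(x*n) - 2/n - (2/3)/n - (2/3)/n - (2/3)/n" by simp
  also have "\<dots> \<le> 2*(q-p) + 2*k*r*m/n - ((q-2)*m*r/(k*n) + 2*(r^2 - 3/4*m^2) - 3/2*m^2*x/n - 2*r^2*m^2/n^2)"
  proof -
    have e: "-2/n = -2*(1/n)" "-(2/3)/n = -(2/3)*(1/n)" "2/3/n = (2/3)*(1/n)" "2/n = 2*(1/n)" by simp_all
    have R: "2*(q-p) + 2*k*r*m/n - ((q-2)*m*r/(k*n) + 2*(r^2 - 3/4*m^2) - 3/2*m^2*x/n - 2*r^2*m^2/n^2)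
      = (2*(q-p) - 2*(r^2 - 3/4*m^2)) + 2*k*r*m/n + (-((q-2)*m*r/(k*n))) + 3/2*m^2*x/n + 2*r^2*m^2/n^2"
      by simp
    have u: "0 \<le> 1/n" using n0 by simp
    show ?thesis unfolding R main e by (rule lin_aux[OF b1[unfolded e] b2[unfolded e] b3[unfolded e] b4 u])
  qed
  finally show ?thesis using L by simp
qed

lemma lin_aux2:
  fixes E Pm Pp M T3 T4 A X p2 r2 q dp p :: real
  assumes "E = Pm + 3*(r2 - 3/4*M) - T3 - T4" "dp = A + X - 9/4*M" "1 - 2*p - 3/2*q \<le> A"
    "-1/4 - 4*p2 \<le> -2*p" "-1/4 - 3*r2 \<le> Pp" "0 \<le> X" "0 \<le> T3" "0 \<le> T4"
    "q = 2*(p2 + r2)" "-Pm = Pp" "0 \<le> p2"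
  shows "1/2 - 9/2*q \<le> dp - E"
  using assms by (simp add: algebra_simps)

lemma F_ineq:
  fixes a b c p r k q da db dc dr dp :: real
  assumes k: "k*k = 3" "k > 0"
    and ab: "a < 0" "b > 0" "c > 0"
    and q: "q = 2*(p^2+r^2)"
    and da: "da = (q - 4*p)*a" and db: "db = (q + 2*p + 2*k*r)*b"
    and dc: "dc = (q + 2*p - 2*k*r)*c"
    and dr: "dr = -(2-q)*r - 3*((k/2)*(c-b)*(a-b-c))"
    and dp: "dp = -(2-q)*p - 3*((1/2)*((b-c)^2 - a*(2*a-b-c)))"
    and con: "p^2 + r^2 + 3/4*(a^2+b^2+c^2 - 2*(a*b+b*c+a*c)) = 1"
  shows "dp - k/2 * ((((db - dc)*r + (b-c)*dr)*(b+c) - (b-c)*r*(db+dc)) / ((b+c)*(b+c)))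
     \<ge> 1/2 - 9/2*q"
proof -
  define x where "x = -a"
  define n where "n = b + c"
  define m where "m = b - c"
  have x0: "x > 0" and n0: "n > 0" using ab by (auto simp: x_def n_def)
  have con2: "p^2 + r^2 + 3/4*x^2 + 3/4*m^2 + 3/2*(x*n) = 1"
    using con unfolding x_def n_def m_def by (simp add: algebra_simps power2_eq_square)
  have xn0: "x*n > 0" using x0 n0 by simp
  have sq: "x^2 \<ge> 0" "m^2 \<ge> 0" "p^2 \<ge> 0" "r^2 \<ge> 0" by auto
  have pr1: "p^2 + r^2 \<le> 1" using con2 xn0 sq by linarith
  have q2: "0 \<le> q" "q \<le> 2" using q pr1 by auto
  have p1: "p \<ge> -1"
  proof -
    have "p^2 \<le> 1" using pr1 sq by linarith
    hence "\<bar>p\<bar> \<le> 1" using abs_le_square_iff[of p 1] by simp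
    thus ?thesis by simp
  qed
  have mn: "\<bar>m\<bar> \<le> n" using ab unfolding m_def n_def by simp
  have Pd: "((db - dc)*r + m*dr)*n - m*r*(db+dc)
     = (q-2)*m*r*n + 2*k*n^2*(r^2 - 3/4*m^2) - 3*k/2*m^2*x*n - 2*k*r^2*m^2"
    unfolding da db dc dr x_def n_def m_def power2_eq_square by (simp add: field_simps)
  have e2: "k/2 * ((((db - dc)*r + (b-c)*dr)*(b+c) - (b-c)*r*(db+dc)) / ((b+c)*(b+c)))
       = k/2*(q-2)*(m*r/n) + 3*(r^2 - 3/4*m^2) - 9/4*m^2*x/n - 3*r^2*m^2/n^2"
  proof -
    have "(((db - dc)*r + (b-c)*dr)*(b+c) - (b-c)*r*(db+dc)) = (q-2)*m*r*n + 2*k*n^2*(r^2 - 3/4*m^2) - 3*k/2*m^2*x*n - 2*k*r^2*m^2"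
      using Pd by (simp add: n_def m_def)
    hence "k/2 * ((((db - dc)*r + (b-c)*dr)*(b+c) - (b-c)*r*(db+dc)) / ((b+c)*(b+c)))
      = k/2 * (((q-2)*m*r*n + 2*k*n^2*(r^2 - 3/4*m^2) - 3*k/2*m^2*x*n - 2*k*r^2*m^2) / (n*n))"
      by (simp add: n_def)
    also have "\<dots> = k/2*(q-2)*(m*r/n) + (k*k)*(r^2 - 3/4*m^2) - 3*(k*k)/4*m^2*x/n - (k*k)*r^2*m^2/n^2"
      using n0 by (simp add: field_simps power2_eq_square)
    finally show ?thesis using k by simp
  qed
  have dp2: "dp = (1-q/2)*(1-2*p) + 9/4*x^2 - 9/4*m^2"
  proof -
    have "dp = -(2-q)*p - 3/2*m^2 + 3*x^2 + 3/2*(x*n)"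
      unfolding dp x_def m_def n_def by (simp add: algebra_simps power2_eq_square)
    also have "3/2*(x*n) = 1 - p^2 - r^2 - 3/4*x^2 - 3/4*m^2" using con2 by linarith
    finally have "dp = - (2 - q) * p - 3 / 2 * m\<^sup>2 + 3 * x\<^sup>2 + (1 - p\<^sup>2 - r\<^sup>2 - 3 / 4 * x\<^sup>2 - 3 / 4 * m\<^sup>2)" .
    thus ?thesis unfolding q by (simp add: field_simps power2_eq_square)
  qed
  have fA: "(1-q/2)*(1-2*p) \<ge> 1 - 2*p - 3/2*q"
  proof -
    have "q/2*(1-2*p) \<le> q/2*3" using q2 p1 by (intro mult_left_mono) auto
    thus ?thesis by (simp add: algebra_simps)
  qed
  have fp: "-2*p \<ge> -1/4 - 4*p^2"
  proof -
    have "0 \<le> (2*p - 1/2)^2" by simp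
    thus ?thesis by (simp add: algebra_simps power2_eq_square)
  qed
  have fB: "k/2*(2-q)*(m*r/n) \<ge> -1/4 - 3*r^2"
  proof -
    have "\<bar>m*r/n\<bar> \<le> \<bar>r\<bar>" using mn n0
      by (simp add: abs_mult abs_div mult_le_cancel_right1 divide_le_eq mult.commute mult_right_mono)
    hence "\<bar>k/2*(2-q)*(m*r/n)\<bar> \<le> k/2*2*\<bar>r\<bar>"
    proof -
      assume h: "\<bar>m*r/n\<bar> \<le> \<bar>r\<bar>"
      have "\<bar>k/2*(2-q)*(m*r/n)\<bar> = (k/2*(2-q))*\<bar>m*r/n\<bar>" using q2 k by (simp add: abs_mult)
      also have "\<dots> \<le> (k/2*2)*\<bar>r\<bar>"
        by (rule mult_mono) (use q2 k h in auto)
      finally show ?thesis by simp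
    qed
    moreover have "k*\<bar>r\<bar> \<le> 1/4 + 3*r^2"
    proof -
      have "0 \<le> (k*\<bar>r\<bar> - 1/2)^2" by simp
      also have "\<dots> = (k*k)*r^2 - k*\<bar>r\<bar> + 1/4" by (simp add: power2_eq_square algebra_simps)
      finally show ?thesis using k by simp
    qed
    ultimately show ?thesis by linarith
  qed
  have nn: "9/4*x^2 \<ge> 0" "9/4*m^2*x/n \<ge> 0" "3*r^2*m^2/n^2 \<ge> 0" using x0 n0 by auto
  have neg: "-(k/2*(q-2)*(m*r/n)) = k/2*(2-q)*(m*r/n)" by (metis minus_diff_eq mult_minus_left mult_minus_right)
  show ?thesis by (rule lin_aux2[OF e2 dp2 fA fp fB nn q neg sq(3)])
qed



lemma barrier:
  fixes f f' :: "real \<Rightarrow> real"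
  assumes der: "\<And>t. t \<ge> T \<Longrightarrow> (f has_real_derivative f' t) (at t)"
    and pos: "\<And>t. t \<ge> T \<Longrightarrow> f t < \<theta> \<Longrightarrow> f' t > 0"
    and Ta: "T \<le> a" and fa: "\<theta> \<le> f a" and ab: "a \<le> b"
  shows "\<theta> \<le> f b"
proof (rule ccontr)
  assume "\<not> \<theta> \<le> f b"
  hence fb: "f b < \<theta>" by simp
  have cont: "continuous_on {a..b} f"
    using der Ta by (intro DERIV_atLeastAtMost_imp_continuous_on) (meson order_trans)
  obtain t where t: "t \<in> {a..b}" "\<forall>y\<in>{a..b}. f t \<le> f y"
    using continuous_attains_inf[OF compact_Icc _ cont] ab by auto
  have "f t \<le> f b" using t(2) ab by auto
  hence ft: "f t < \<theta>" using fb by simp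
  hence "t \<noteq> a" using fa by auto
  hence at: "a < t" using t by auto
  have "f' t > 0" using pos[OF _ ft] t Ta by auto
  then obtain d where d: "d > 0" "\<forall>h>0. h < d \<longrightarrow> f (t - h) < f t"
    using DERIV_pos_inc_left[OF der[of t]] t Ta by auto
  define h where "h = min d (t - a) / 2"
  have h: "h > 0" "h < d" "h \<le> t - a" using d at by (auto simp: h_def)
  have "f (t - h) < f t" using d h by auto
  moreover have "t - h \<in> {a..b}" using h t by auto
  ultimately show False using t by force
qed

lemma enter:
  fixes f f' :: "real \<Rightarrow> real"
  assumes der: "\<And>t. t \<ge> T \<Longrightarrow> (f has_real_derivative f' t) (at t)"
    and pos: "\<And>t. t \<ge> T \<Longrightarrow> f t < \<theta> \<Longrightarrow> f' t \<ge> e" and e: "e > 0"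
  shows "\<exists>t\<ge>T. \<theta> \<le> f t"
proof (rule ccontr)
  assume "\<not> (\<exists>t\<ge>T. \<theta> \<le> f t)"
  hence all: "\<And>t. t \<ge> T \<Longrightarrow> f t < \<theta>" by force
  define L where "L = (\<theta> - f T)/e + 1"
  have "(\<theta> - f T)/e > 0" using all[of T] e by simp
  hence L: "L > 0" by (simp add: L_def)
  obtain z where z: "T < z" "z < T + L" "f (T + L) - f T = (T + L - T) * f' z"
    using MVT2[of T "T + L" f f'] L der by auto
  have "f' z \<ge> e" using pos[of z] all[of z] z by auto
  hence "L * f' z \<ge> L * e" using L by simp
  also have "L * e = \<theta> - f T + e" using e by (simp add: L_def field_simps)
  finally have "f (T + L) > \<theta>" using z e by simp
  thus False using all[of "T + L"] L by simp
qed

lemma lower_lin: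
  fixes f f' :: "real \<Rightarrow> real"
  assumes der: "\<And>t. (f has_real_derivative f' t) (at t)"
    and pos: "\<And>t. f' t \<ge> c" and ab: "a \<le> b"
  shows "f b \<ge> f a + c * (b - a)"
proof (cases "a = b")
  case True thus ?thesis by simp
next
  case False
  hence "a < b" using ab by simp
  then obtain z where z: "a < z" "z < b" "f b - f a = (b - a) * f' z"
    using MVT2[of a b f f'] der by auto
  have "(b - a) * f' z \<ge> (b - a) * c" using pos[of z] ab by (intro mult_left_mono) auto
  thus ?thesis using z by (simp add: algebra_simps)
qed


lemma bounds:
  fixes a b c p r k :: real
  assumes k: "k*k = 3" "k > 0"
    and ab: "a < 0" "b > 0" "c > 0"
    and con: "p^2 + r^2 + 3/4*(a^2+b^2+c^2 - 2*(a*b+b*c+a*c)) = 1"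
  shows "0 < -a*(b+c)" "-a*(b+c) \<le> 2/3" "\<bar>(b-c)*r/(b+c)/k\<bar> \<le> 1/(3*(b+c))"
    "\<bar>(b-c)*r/(b+c)\<bar> \<le> 1" "\<bar>p\<bar> \<le> 1" "-a*b*c \<le> (b+c)/6"
proof -
  define x where "x = -a"
  define n where "n = b + c"
  define m where "m = b - c"
  have x0: "x > 0" and n0: "n > 0" using ab by (auto simp: x_def n_def)
  have con2: "p^2 + r^2 + 3/4*x^2 + 3/4*m^2 + 3/2*(x*n) = 1"
    using con unfolding x_def n_def m_def by (simp add: algebra_simps power2_eq_square)
  have xn0: "x*n > 0" using x0 n0 by simp
  have sq: "x^2 \<ge> 0" "m^2 \<ge> 0" "p^2 \<ge> 0" "r^2 \<ge> 0" by auto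
  have pr1: "p^2 + r^2 \<le> 1" using con2 xn0 sq by linarith
  have rm1: "r^2 + 3/4*m^2 \<le> 1" using con2 xn0 sq by linarith
  have xn: "x*n \<le> 2/3" using con2 sq by linarith
  show "0 < -a*(b+c)" using xn0 by (simp add: x_def n_def)
  show "-a*(b+c) \<le> 2/3" using xn by (simp add: x_def n_def)
  have krm: "k*\<bar>r*m\<bar> \<le> 1"
  proof -
    have "0 \<le> (\<bar>r\<bar> - k/2*\<bar>m\<bar>)^2" by simp
    also have "\<dots> = r^2 + (k*k)/4*m^2 - k*\<bar>r*m\<bar>"
      by (simp add: power2_eq_square algebra_simps abs_mult)
    finally show ?thesis using rm1 k by simp
  qed
  have "\<bar>(b-c)*r/(b+c)/k\<bar> = \<bar>r*m\<bar> / (n*k)"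
    using k n0 unfolding m_def[symmetric] n_def[symmetric] by (simp add: abs_mult abs_div mult.commute)
  also have "\<dots> = (k*\<bar>r*m\<bar>) / (k*k*n)" using k n0 by (simp add: field_simps)
  also have "\<dots> \<le> 1/(k*k*n)" using krm k n0 by (intro divide_right_mono) auto
  also have "\<dots> = 1/(3*(b+c))" using k by (simp add: n_def)
  finally show "\<bar>(b-c)*r/(b+c)/k\<bar> \<le> 1/(3*(b+c))" .
  have "r^2 \<le> 1" using pr1 sq by linarith
  hence r1: "\<bar>r\<bar> \<le> 1" using abs_le_square_iff[of r 1] by simp
  have mn: "\<bar>m\<bar> \<le> n" using ab unfolding m_def n_def by simp
  have "\<bar>(b-c)*r/(b+c)\<bar> = \<bar>m\<bar>/n * \<bar>r\<bar>" using n0 unfolding m_def n_def by (simp add: abs_mult abs_div)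
  also have "\<dots> \<le> 1 * 1" using mn n0 r1 by (intro mult_mono) (auto simp: divide_le_eq)
  finally show "\<bar>(b-c)*r/(b+c)\<bar> \<le> 1" by simp
  have "p^2 \<le> 1" using pr1 sq by linarith
  thus "\<bar>p\<bar> \<le> 1" using abs_le_square_iff[of p 1] by simp
  have bc: "b*c \<le> n^2/4"
  proof -
    have "0 \<le> (b - c)^2" by simp
    thus ?thesis unfolding n_def by (simp add: power2_eq_square algebra_simps)
  qed
  have "-a*b*c = x*(b*c)" by (simp add: x_def)
  also have "\<dots> \<le> x*(n^2/4)" using bc x0 by (intro mult_left_mono) auto
  also have "\<dots> = (x*n)*n/4" by (simp add: power2_eq_square)
  also have "\<dots> \<le> (2/3)*n/4" using xn n0 by (intro divide_right_mono mult_right_mono) auto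
  finally show "-a*b*c \<le> (b+c)/6" by (simp add: n_def)
qed

theorem mainTheorem16:
  fixes N1 N2 N3 Sp Sm :: "real \<Rightarrow> real"
  assumes "WH_solution N1 N2 N3 Sp Sm"
    and "\<forall>t. N1 t < 0" and "\<forall>t. N2 t > 0" and "\<forall>t. N3 t > 0"
  shows "\<forall>\<epsilon>>0. \<exists>T. \<forall>\<tau>\<ge>T. - N1 \<tau> * (N2 \<tau> + N3 \<tau>) \<ge> 1/2 - \<epsilon>"
proof -
  define k where "k = sqrt (3::real)"
  have k: "k*k = 3" "k > 0" by (simp_all add: k_def)
  define q where "q = (\<lambda>t. WH_q (Sp t) (Sm t))"
  define d1 where "d1 = (\<lambda>t. (q t - 4 * Sp t) * N1 t)"
  define d2 where "d2 = (\<lambda>t. (q t + 2 * Sp t + 2 * k * Sm t) * N2 t)"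
  define d3 where "d3 = (\<lambda>t. (q t + 2 * Sp t - 2 * k * Sm t) * N3 t)"
  define dp where "dp = (\<lambda>t. - (2 - q t) * Sp t - 3 * WH_Sp (N1 t) (N2 t) (N3 t))"
  define dr where "dr = (\<lambda>t. - (2 - q t) * Sm t - 3 * WH_Sm (N1 t) (N2 t) (N3 t))"
  have WH: "\<And>t. (N1 has_real_derivative d1 t) (at t) \<and> (N2 has_real_derivative d2 t) (at t)
      \<and> (N3 has_real_derivative d3 t) (at t) \<and> (Sp has_real_derivative dp t) (at t)
      \<and> (Sm has_real_derivative dr t) (at t)
      \<and> (Sp t)\<^sup>2 + (Sm t)\<^sup>2 + (3/4) * ((N1 t)\<^sup>2 + (N2 t)\<^sup>2 + (N3 t)\<^sup>2
            - 2 * (N1 t * N2 t + N2 t * N3 t + N1 t * N3 t)) = 1"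
    using assms(1) unfolding WH_solution_def d1_def d2_def d3_def dp_def dr_def q_def k_def by blast
  have D1: "\<And>t. (N1 has_real_derivative d1 t) (at t)" using WH by blast
  have D2: "\<And>t. (N2 has_real_derivative d2 t) (at t)" using WH by blast
  have D3: "\<And>t. (N3 has_real_derivative d3 t) (at t)" using WH by blast
  have DP: "\<And>t. (Sp has_real_derivative dp t) (at t)" using WH by blast
  have DR: "\<And>t. (Sm has_real_derivative dr t) (at t)" using WH by blast
  have con: "\<And>t. (Sp t)^2 + (Sm t)^2 + 3/4*((N1 t)^2 + (N2 t)^2 + (N3 t)^2
            - 2 * (N1 t * N2 t + N2 t * N3 t + N1 t * N3 t)) = 1" using WH by simp
  have qt: "\<And>t. q t = 2*((Sp t)^2 + (Sm t)^2)" by (simp add: q_def WH_q_def)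
  have dr': "\<And>t. dr t = -(2 - q t)*Sm t - 3*((k/2)*(N3 t - N2 t)*(N1 t - N2 t - N3 t))"
    by (simp add: dr_def WH_Sm_def k_def)
  have dp': "\<And>t. dp t = -(2 - q t)*Sp t - 3*((1/2)*((N2 t - N3 t)^2 - N1 t*(2*N1 t - N2 t - N3 t)))"
    by (simp add: dp_def WH_Sp_def)
  have a0: "\<And>t. N1 t < 0" and b0: "\<And>t. N2 t > 0" and c0: "\<And>t. N3 t > 0" using assms by auto
  have n0: "\<And>t. N2 t + N3 t \<noteq> 0" using b0 c0 by (smt (verit))

  define Z where "Z = (\<lambda>t. - N1 t * (N2 t + N3 t))"
  define P where "P = (\<lambda>t. (N2 t - N3 t) * Sm t / (N2 t + N3 t))"
  define Pd where "Pd = (\<lambda>t. (((d2 t - d3 t)*Sm t + (N2 t - N3 t)*dr t)*(N2 t + N3 t)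
       - (N2 t - N3 t)*Sm t*(d2 t + d3 t)) / ((N2 t + N3 t)*(N2 t + N3 t)))"
  have dPd: "(P has_real_derivative Pd t) (at t)" for t
  proof -
    have "((\<lambda>t. (N2 t - N3 t) * Sm t / (N2 t + N3 t)) has_real_derivative
       (((d2 t - d3 t) * Sm t + dr t * (N2 t - N3 t)) * (N2 t + N3 t) - (N2 t - N3 t) * Sm t * (d2 t + d3 t))
         / ((N2 t + N3 t) * (N2 t + N3 t))) (at t)"
      by (rule DERIV_divide[OF DERIV_mult[OF DERIV_diff[OF D2 D3] DR] DERIV_add[OF D2 D3] n0])
    thus ?thesis unfolding P_def Pd_def by (simp add: ac_simps)
  qed
  define Y where "Y = (\<lambda>t. ln (Z t) - P t / k)"
  define Yd where "Yd = (\<lambda>t. (-(d1 t*(N2 t+N3 t)) - N1 t*(d2 t+d3 t)) / (-N1 t*(N2 t+N3 t)) - Pd t / k)"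
  have Zpos: "\<And>t. Z t > 0" unfolding Z_def using a0 b0 c0
    by (metis add_pos_pos mult_pos_pos neg_0_less_iff_less)
  have dY: "(Y has_real_derivative Yd t) (at t)" for t
  proof -
    have dZ: "(Z has_real_derivative (- d1 t) * (N2 t + N3 t) + (d2 t + d3 t) * (- N1 t)) (at t)"
      unfolding Z_def by (rule DERIV_mult[OF DERIV_minus[OF D1] DERIV_add[OF D2 D3]])
    have "((\<lambda>t. ln (Z t) - P t / k) has_real_derivative
        1 / Z t * ((- d1 t) * (N2 t + N3 t) + (d2 t + d3 t) * (- N1 t)) - Pd t / k) (at t)"
      by (rule DERIV_diff[OF DERIV_chain2[OF DERIV_ln_divide[OF Zpos] dZ] DERIV_cdivide[OF dPd]])
    moreover have "1 / Z t * ((- d1 t) * (N2 t + N3 t) + (d2 t + d3 t) * (- N1 t)) - Pd t / k = Yd t"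
    proof -
      have e: "(- d1 t) * (N2 t + N3 t) + (d2 t + d3 t) * (- N1 t) = -(d1 t*(N2 t+N3 t)) - N1 t*(d2 t+d3 t)"
        by (simp add: algebra_simps)
      show ?thesis unfolding Yd_def e by (simp add: Z_def)
    qed
    ultimately show ?thesis unfolding Y_def by simp
  qed
  have Ydb: "Yd t \<ge> 3/2 - 3 * Z t - 4/(N2 t + N3 t)" if "N2 t + N3 t \<ge> 1" for t
    unfolding Yd_def Pd_def Z_def
    by (rule Y_ineq[OF k a0 b0 c0 qt d1_def[THEN fun_cong] d2_def[THEN fun_cong] d3_def[THEN fun_cong]
          dr' con that])

  define Dl where "Dl = (\<lambda>t. - N1 t * N2 t * N3 t)"
  have Dlpos: "\<And>t. Dl t > 0" unfolding Dl_def using a0 b0 c0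
    by (metis mult_pos_pos neg_0_less_iff_less)
  define G where "G = (\<lambda>t. Sp t - k/2 * P t + 3/2 * ln (Dl t))"
  define Gd where "Gd = (\<lambda>t. dp t - k/2 * Pd t + 3/2 * (3 * q t))"
  have dG: "(G has_real_derivative Gd t) (at t)" for t
  proof -
    have dD: "(Dl has_real_derivative ((- d1 t) * N2 t + d2 t * (- N1 t)) * N3 t + d3 t * (- N1 t * N2 t)) (at t)"
      unfolding Dl_def by (rule DERIV_mult[OF DERIV_mult[OF DERIV_minus[OF D1] D2] D3])
    have e: "1 / Dl t * (((- d1 t) * N2 t + d2 t * (- N1 t)) * N3 t + d3 t * (- N1 t * N2 t)) = 3 * q t"
    proof -
      have "((- d1 t) * N2 t + d2 t * (- N1 t)) * N3 t + d3 t * (- N1 t * N2 t) = (3 * q t) * Dl t"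
        unfolding d1_def d2_def d3_def Dl_def by (simp add: algebra_simps)
      thus ?thesis using Dlpos[of t] by simp
    qed
    have "((\<lambda>t. Sp t - k/2 * P t + 3/2 * ln (Dl t)) has_real_derivative
        dp t - k/2 * Pd t + 3/2 * (1 / Dl t * (((- d1 t) * N2 t + d2 t * (- N1 t)) * N3 t + d3 t * (- N1 t * N2 t)))) (at t)"
      by (rule DERIV_add[OF DERIV_diff[OF DP DERIV_cmult[OF dPd]] DERIV_cmult[OF DERIV_chain2[OF DERIV_ln_divide[OF Dlpos] dD]]])
    thus ?thesis unfolding G_def Gd_def e .
  qed
  have Gdb: "Gd t \<ge> 1/2" for t
  proof -
    have "dp t - k/2 * Pd t \<ge> 1/2 - 9/2 * q t"
      unfolding Pd_def
      by (rule F_ineq[OF k a0 b0 c0 qt d1_def[THEN fun_cong] d2_def[THEN fun_cong] d3_def[THEN fun_cong]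
          dr' dp' con])
    thus ?thesis unfolding Gd_def by simp
  qed
  have B: "\<And>t. Z t \<le> 2/3" "\<And>t. \<bar>P t / k\<bar> \<le> 1/(3*(N2 t + N3 t))" "\<And>t. \<bar>P t\<bar> \<le> 1"
    "\<And>t. \<bar>Sp t\<bar> \<le> 1" "\<And>t. Dl t \<le> (N2 t + N3 t)/6"
    using bounds[OF k a0 b0 c0 con] unfolding Z_def P_def Dl_def by auto
  have k2: "k \<le> 2"
  proof (rule ccontr)
    assume "\<not> k \<le> 2" hence "k*k > 2*2" using k by (intro mult_strict_mono) auto
    thus False using k by simp
  qed
  have Fb: "\<And>t. Sp t - k/2 * P t \<le> 2"
  proof -
    fix t
    have "k * \<bar>P t\<bar> \<le> 2 * 1" using B(3)[of t] k k2 by (intro mult_mono) auto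
    hence "\<bar>k/2 * P t\<bar> \<le> 1" using k by (simp add: abs_mult)
    thus "Sp t - k/2 * P t \<le> 2" using B(4)[of t] by linarith
  qed
  have grow: "\<exists>T. \<forall>t\<ge>T. N2 t + N3 t \<ge> N0" if N0: "N0 > 0" for N0
  proof -
    define T where "T = max 0 (2*(3/2*ln(N0/6) - G 0 + 2))"
    have "\<forall>t\<ge>T. N2 t + N3 t \<ge> N0"
    proof (intro allI impI)
      fix t assume t: "t \<ge> T"
      have "G t \<ge> G 0 + 1/2 * (t - 0)" using t
        by (intro lower_lin[OF dG Gdb]) (simp add: T_def)
      hence "3/2 * ln (Dl t) \<ge> G 0 + t/2 - 2" using Fb[of t] unfolding G_def by simp
      moreover have "G 0 + t/2 - 2 \<ge> 3/2*ln(N0/6)" using t by (simp add: T_def)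
      ultimately have "ln (Dl t) \<ge> ln (N0/6)" by simp
      hence "Dl t \<ge> N0/6" using Dlpos[of t] N0 by simp
      thus "N2 t + N3 t \<ge> N0" using B(5)[of t] by simp
    qed
    thus ?thesis by blast
  qed
  show ?thesis
  proof (intro allI impI)
    fix \<epsilon> :: real assume \<epsilon>: "\<epsilon> > 0"
    show "\<exists>T. \<forall>\<tau>\<ge>T. - N1 \<tau> * (N2 \<tau> + N3 \<tau>) \<ge> 1/2 - \<epsilon>"
    proof (cases "\<epsilon> \<ge> 1/2")
      case True
      thus ?thesis using Zpos unfolding Z_def by (smt (verit))
    next
      case False
      define A where "A = 1/2 - \<epsilon>"
      define Bb where "Bb = 1/2 - \<epsilon>/2"
      have A0: "A > 0" and AB: "A < Bb" using False \<epsilon> by (auto simp: A_def Bb_def)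
      define \<delta> where "\<delta> = (ln Bb - ln A)/2"
      have \<delta>0: "\<delta> > 0" using A0 AB by (simp add: \<delta>_def)
      define N0 where "N0 = max 1 (max (8/\<epsilon>) (1/(3*\<delta>)))"
      have N00: "N0 > 0" by (simp add: N0_def)
      obtain T1 where T1: "\<And>t. t \<ge> T1 \<Longrightarrow> N2 t + N3 t \<ge> N0" using grow[OF N00] by blast
      define \<theta> where "\<theta> = ln Bb - \<delta>"
      have smallP: "P t / k \<le> \<delta>" "P t / k \<ge> -\<delta>" if t: "t \<ge> T1" for t
      proof -
        have n: "N2 t + N3 t \<ge> 1/(3*\<delta>)" "N2 t + N3 t > 0" using T1[OF t] b0[of t] c0[of t]
          unfolding N0_def by auto
        have "1/(3*(N2 t + N3 t)) \<le> \<delta>" using n \<delta>0 by (simp add: field_simps)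
        thus "P t / k \<le> \<delta>" "P t / k \<ge> -\<delta>" using B(2)[of t] by linarith+
      qed
      have Yd_pos: "Yd t \<ge> \<epsilon>" if t: "t \<ge> T1" and Yt: "Y t < \<theta>" for t
      proof -
        have n: "N2 t + N3 t \<ge> 8/\<epsilon>" "N2 t + N3 t \<ge> 1" using T1[OF t] unfolding N0_def by auto
        have "4/(N2 t + N3 t) \<le> \<epsilon>/2" using n \<epsilon> by (simp add: field_simps)
        moreover have "Z t < Bb"
        proof -
          have "ln (Z t) < ln Bb" using Yt smallP[OF t] unfolding Y_def \<theta>_def by simp
          thus ?thesis using Zpos[of t] AB A0 by simp
        qed
        ultimately show ?thesis using Ydb[OF n(2)] unfolding Bb_def by linarith
      qed
      obtain t1 where t1: "t1 \<ge> T1" "\<theta> \<le> Y t1"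
        using enter[of T1 Y Yd \<theta> \<epsilon>] dY Yd_pos \<epsilon> by blast
      have "\<forall>\<tau>\<ge>t1. - N1 \<tau> * (N2 \<tau> + N3 \<tau>) \<ge> 1/2 - \<epsilon>"
      proof (intro allI impI)
        fix \<tau> assume \<tau>: "\<tau> \<ge> t1"
        have "\<theta> \<le> Y \<tau>"
          by (rule barrier[of T1 Y Yd \<theta> t1 \<tau>]) (use dY Yd_pos \<epsilon> t1 \<tau> in \<open>auto intro: less_le_trans\<close>)
        moreover have "P \<tau> / k \<ge> -\<delta>" using smallP[of \<tau>] \<tau> t1 by auto
        moreover have "ln A = ln Bb - 2*\<delta>" unfolding \<delta>_def by (simp add: field_simps)
        ultimately have "ln (Z \<tau>) \<ge> ln A" unfolding Y_def \<theta>_def by simp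
        hence "Z \<tau> \<ge> A" using Zpos[of \<tau>] A0 by simp
        thus "- N1 \<tau> * (N2 \<tau> + N3 \<tau>) \<ge> 1/2 - \<epsilon>" unfolding Z_def A_def .
      qed
      thus ?thesis by blast
    qed
  qed
qed

end
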